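(* Let $G=(V,E)$ be a connected graph with maximum degree $\Delta\ge 2$, $s\in V$, $\mathcal{T}$ the layering tree of $G$ with respect to $s$, and $\ell\ge\ell(\mathcal{T})$ an integer. Let $P$ be a part of $\mathcal{T}$ at depth $k$ and let $i\ge k$. Then $|\mathrm{comp}(P)\cap L_{\le i}|\le \Delta^{\ell+i-k+2}$.
   Context: For a connected graph $G$ and root $s\in V(G)$, the BFS layers are $L_i=\{v: d_G(s,v)=i\}$ for $i\ge 0$, with $L_{\le k}=L_0\cup\dots\cup L_k$, $L_{\ge k}=\bigcup_{j\ge k}L_j$, $L_{-1}=\emptyset$. For each $i\ge 0$, let $S_i^1,\dots,S_i^{s_i}$ be the connected components of $G\setminus L_{\le i-1}$ (i.e. of $G[L_{\ge i}]$), and let $P_i^j=S_i^j\cap L_i$; the nonempty sets $P_i^j$ are the parts at layer (depth) $i$, and the set $\mathcal{P}$ of all parts over all layers partitions $V(G)$. The layering tree $\mathcal{T}=(\mathcal{P},\mathcal{E})$ has the parts as vertices, with $(P,P')\in\mathcal{E}$ iff some $u\in P$, $u'\in P'$ are adjacent in $G$; it is rooted at $\{s\}$. Its length is $\ell(\mathcal{T})=\max_{P\in\mathcal{P}}\max_{u,v\in P} d_G(u,v)$ (distances measured in $G$). For a part $P$, $\mathrm{comp}(P)$ is the union of $P$ and all parts that are descendants of $P$ in the rooted tree $\mathcal{T}$; if $P$ is at layer $k$, this is the connected component of $G\setminus L_{\le k-1}$ containing $P$. *)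

theory Defs
  imports Main
begin

definition graph :: "'a set \<Rightarrow> ('a \<Rightarrow> 'a \<Rightarrow> bool) \<Rightarrow> bool" where
  "graph V E \<longleftrightarrow> finite V \<and> (\<forall>u v. E u v \<longrightarrow> u \<in> V \<and> v \<in> V)
     \<and> (\<forall>u v. E u v \<longrightarrow> E v u) \<and> (\<forall>u. \<not> E u u)"

definition walk_in :: "('b \<Rightarrow> 'b \<Rightarrow> bool) \<Rightarrow> 'b set \<Rightarrow> 'b list \<Rightarrow> bool" where
  "walk_in R S xs \<longleftrightarrow> xs \<noteq> [] \<and> set xs \<subseteq> S
     \<and> (\<forall>i. Suc i < length xs \<longrightarrow> R (xs ! i) (xs ! Suc i))"

definition connected_graph :: "'a set \<Rightarrow> ('a \<Rightarrow> 'a \<Rightarrow> bool) \<Rightarrow> bool" where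
  "connected_graph V E \<longleftrightarrow> V \<noteq> {} \<and>
     (\<forall>u\<in>V. \<forall>v\<in>V. \<exists>xs. walk_in E V xs \<and> hd xs = u \<and> last xs = v)"

definition gdist :: "'a set \<Rightarrow> ('a \<Rightarrow> 'a \<Rightarrow> bool) \<Rightarrow> 'a \<Rightarrow> 'a \<Rightarrow> nat" where
  "gdist V E u v = (LEAST n. \<exists>xs. walk_in E V xs \<and> hd xs = u \<and> last xs = v \<and> length xs = Suc n)"

definition degree :: "'a set \<Rightarrow> ('a \<Rightarrow> 'a \<Rightarrow> bool) \<Rightarrow> 'a \<Rightarrow> nat" where
  "degree V E u = card {v \<in> V. E u v}"

definition max_degree :: "'a set \<Rightarrow> ('a \<Rightarrow> 'a \<Rightarrow> bool) \<Rightarrow> nat" where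
  "max_degree V E = Max (degree V E ` V)"

definition layer :: "'a set \<Rightarrow> ('a \<Rightarrow> 'a \<Rightarrow> bool) \<Rightarrow> 'a \<Rightarrow> nat \<Rightarrow> 'a set" where
  "layer V E s i = {v \<in> V. gdist V E s v = i}"

definition layers_le :: "'a set \<Rightarrow> ('a \<Rightarrow> 'a \<Rightarrow> bool) \<Rightarrow> 'a \<Rightarrow> nat \<Rightarrow> 'a set" where
  "layers_le V E s i = {v \<in> V. gdist V E s v \<le> i}"

definition layers_ge :: "'a set \<Rightarrow> ('a \<Rightarrow> 'a \<Rightarrow> bool) \<Rightarrow> 'a \<Rightarrow> nat \<Rightarrow> 'a set" where
  "layers_ge V E s i = {v \<in> V. i \<le> gdist V E s v}"

definition component_of :: "('a \<Rightarrow> 'a \<Rightarrow> bool) \<Rightarrow> 'a set \<Rightarrow> 'a \<Rightarrow> 'a set" where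
  "component_of E S x = {y. \<exists>xs. walk_in E S xs \<and> hd xs = x \<and> last xs = y}"

definition components :: "('a \<Rightarrow> 'a \<Rightarrow> bool) \<Rightarrow> 'a set \<Rightarrow> 'a set set" where
  "components E S = component_of E S ` S"

definition parts_at :: "'a set \<Rightarrow> ('a \<Rightarrow> 'a \<Rightarrow> bool) \<Rightarrow> 'a \<Rightarrow> nat \<Rightarrow> 'a set set" where
  "parts_at V E s i = {C \<inter> layer V E s i | C. C \<in> components E (layers_ge V E s i)
                         \<and> C \<inter> layer V E s i \<noteq> {}}"

definition parts :: "'a set \<Rightarrow> ('a \<Rightarrow> 'a \<Rightarrow> bool) \<Rightarrow> 'a \<Rightarrow> 'a set set" where
  "parts V E s = (\<Union>i. parts_at V E s i)"

definition tree_adj :: "('a \<Rightarrow> 'a \<Rightarrow> bool) \<Rightarrow> 'a set \<Rightarrow> 'a set \<Rightarrow> bool" where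
  "tree_adj E P Q \<longleftrightarrow> (\<exists>u\<in>P. \<exists>v\<in>Q. E u v)"

definition tree_length :: "'a set \<Rightarrow> ('a \<Rightarrow> 'a \<Rightarrow> bool) \<Rightarrow> 'a \<Rightarrow> nat" where
  "tree_length V E s = Max (\<Union>P\<in>parts V E s. {gdist V E u v | u v. u \<in> P \<and> v \<in> P})"

text \<open>Q is a descendant of P (or P itself) in the layering tree rooted at {s}:
  every tree path from the root {s} to Q passes through P.\<close>
definition tree_desc :: "'a set \<Rightarrow> ('a \<Rightarrow> 'a \<Rightarrow> bool) \<Rightarrow> 'a \<Rightarrow> 'a set \<Rightarrow> 'a set \<Rightarrow> bool" where
  "tree_desc V E s P Q \<longleftrightarrow> Q \<in> parts V E s \<and>
     (\<forall>ps. walk_in (tree_adj E) (parts V E s) ps \<and> hd ps = {s} \<and> last ps = Q \<longrightarrow> P \<in> set ps)"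

definition comp_part :: "'a set \<Rightarrow> ('a \<Rightarrow> 'a \<Rightarrow> bool) \<Rightarrow> 'a \<Rightarrow> 'a set \<Rightarrow> 'a set" where
  "comp_part V E s P = \<Union>{Q. tree_desc V E s P Q}"

end

theory Submission imports Defs begin

lemma walk_alt: "walk_in R S xs \<longleftrightarrow> xs \<noteq> [] \<and> set xs \<subseteq> S \<and> successively R xs"
  unfolding walk_in_def successively_conv_nth by simp

lemma walk_single: "u \<in> S \<Longrightarrow> walk_in R S [u]"
  by (simp add: walk_alt)

lemma walk_join:
  assumes "walk_in R S xs" "walk_in R S ys" "last xs = hd ys"
  shows "walk_in R S (xs @ tl ys)" "hd (xs @ tl ys) = hd xs" "last (xs @ tl ys) = last ys"
  using assms
  apply (cases ys; auto simp: walk_alt successively_append_iff successively_Cons)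
  using assms by (cases ys; auto simp: walk_alt)+

lemma walk_take:
  assumes "walk_in R S xs" "0 < n" "n \<le> length xs"
  shows "walk_in R S (take n xs)" "hd (take n xs) = hd xs" "last (take n xs) = xs ! (n - 1)"
proof -
  have "successively R (take n xs) \<and> successively R (drop n xs)"
    using successively_append_iff[of R "take n xs" "drop n xs", unfolded append_take_drop_id] assms
    by (simp add: walk_alt)
  then show "walk_in R S (take n xs)" using assms
    by (auto simp: walk_alt successively_append_iff dest: in_set_takeD)
  show "hd (take n xs) = hd xs" using assms by (cases xs) (auto simp: walk_alt)
  show "last (take n xs) = xs ! (n - 1)" using assms by (simp add: last_conv_nth walk_alt)
qed

lemma walk_drop:
  assumes "walk_in R S xs" "n < length xs"
  shows "walk_in R S (drop n xs)" "hd (drop n xs) = xs ! n" "last (drop n xs) = last xs"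
proof -
  have "successively R (take n xs) \<and> successively R (drop n xs)"
    using successively_append_iff[of R "take n xs" "drop n xs", unfolded append_take_drop_id] assms
    by (simp add: walk_alt)
  then show "walk_in R S (drop n xs)" using assms
    by (auto simp: walk_alt successively_append_iff dest: in_set_dropD)
  show "hd (drop n xs) = xs ! n" using assms by (simp add: hd_drop_conv_nth)
  show "last (drop n xs) = last xs" using assms by simp
qed

lemma walk_rev:
  assumes "walk_in R S xs" "\<And>u v. R u v \<Longrightarrow> R v u"
  shows "walk_in R S (rev xs)" "hd (rev xs) = last xs" "last (rev xs) = hd xs"
  using assms by (auto simp: walk_alt hd_rev last_rev elim!: successively_mono)

lemma walk_mono: "walk_in R S xs \<Longrightarrow> S \<subseteq> T \<Longrightarrow> walk_in R T xs"
  by (auto simp: walk_in_def)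

context
  fixes V :: "'a set" and E :: "'a \<Rightarrow> 'a \<Rightarrow> bool"
  assumes G: "graph V E" and CG: "connected_graph V E"
begin

lemma Esym: "E u v \<Longrightarrow> E v u"
  using G unfolding graph_def by blast

lemma finV: "finite V"
  using G unfolding graph_def by blast

lemma EV: "E u v \<Longrightarrow> u \<in> V \<and> v \<in> V"
  using G unfolding graph_def by blast

lemma gdist_walk:
  assumes "u \<in> V" "v \<in> V"
  shows "\<exists>xs. walk_in E V xs \<and> hd xs = u \<and> last xs = v \<and> length xs = Suc (gdist V E u v)"
proof -
  obtain xs where xs: "walk_in E V xs" "hd xs = u" "last xs = v"
    using CG assms unfolding connected_graph_def by blast
  then have "length xs = Suc (length xs - 1)" by (cases xs) (auto simp: walk_in_def)
  then have "\<exists>n xs. walk_in E V xs \<and> hd xs = u \<and> last xs = v \<and> length xs = Suc n"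
    using xs by blast
  then show ?thesis unfolding gdist_def by (rule LeastI_ex)
qed

lemma gdist_le:
  assumes "walk_in E V xs" "hd xs = u" "last xs = v"
  shows "gdist V E u v \<le> length xs - 1"
proof -
  have "length xs = Suc (length xs - 1)" using assms by (cases xs) (auto simp: walk_in_def)
  then show ?thesis unfolding gdist_def using assms by (intro Least_le) blast
qed

lemma gdist_tri:
  assumes "u \<in> V" "v \<in> V" "w \<in> V"
  shows "gdist V E u w \<le> gdist V E u v + gdist V E v w"
proof -
  obtain xs where xs: "walk_in E V xs" "hd xs = u" "last xs = v" "length xs = Suc (gdist V E u v)"
    using gdist_walk assms by blast
  obtain ys where ys: "walk_in E V ys" "hd ys = v" "last ys = w" "length ys = Suc (gdist V E v w)"
    using gdist_walk assms by blast
  have "gdist V E u w \<le> length (xs @ tl ys) - 1"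
    using walk_join[of E V xs ys] xs ys by (intro gdist_le) auto
  then show ?thesis using xs ys by simp
qed

lemma gdist_nth:
  assumes "walk_in E V xs" "hd xs = u" "length xs = Suc (gdist V E u (last xs))" "t < length xs"
  shows "gdist V E u (xs ! t) = t"
proof -
  have sV: "set xs \<subseteq> V" using assms(1) by (simp add: walk_in_def)
  have uV: "u \<in> V" using assms sV by (cases xs) auto
  have lV: "last xs \<in> V" using assms sV by (cases xs) auto
  have tV: "xs ! t \<in> V" using assms sV by auto
  have "gdist V E u (xs ! t) \<le> length (take (Suc t) xs) - 1"
    using walk_take[of E V xs "Suc t"] assms by (intro gdist_le) auto
  then have le: "gdist V E u (xs ! t) \<le> t" using assms by simp
  have "gdist V E (xs ! t) (last xs) \<le> length (drop t xs) - 1"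
    using walk_drop[of E V xs t] assms by (intro gdist_le) auto
  moreover have "gdist V E u (last xs) \<le> gdist V E u (xs ! t) + gdist V E (xs ! t) (last xs)"
    using gdist_tri uV lV tV by blast
  ultimately have "t \<le> gdist V E u (xs ! t)" using assms by simp
  then show ?thesis using le by simp
qed

lemma gdist_0:
  assumes "u \<in> V" "v \<in> V" "gdist V E u v = 0"
  shows "u = v"
proof -
  obtain xs where xs: "walk_in E V xs" "hd xs = u" "last xs = v" "length xs = Suc (gdist V E u v)"
    using gdist_walk assms by blast
  then show ?thesis using assms(3) by (cases xs) auto
qed

lemma comp_self: "x \<in> S \<Longrightarrow> x \<in> component_of E S x"
  unfolding component_of_def using walk_single[of x S E] by force

lemma comp_sub: "component_of E S x \<subseteq> S"
  unfolding component_of_def walk_in_def by auto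

lemma comp_eq:
  assumes "y \<in> component_of E S x"
  shows "component_of E S y = component_of E S x"
proof -
  obtain xs where xs: "walk_in E S xs" "hd xs = x" "last xs = y"
    using assms unfolding component_of_def by blast
  show ?thesis
  proof
    show "component_of E S y \<subseteq> component_of E S x"
    proof
      fix z assume "z \<in> component_of E S y"
      then obtain ys where ys: "walk_in E S ys" "hd ys = y" "last ys = z"
        unfolding component_of_def by blast
      show "z \<in> component_of E S x"
        unfolding component_of_def using walk_join[of E S xs ys] xs ys by auto
    qed
  next
    show "component_of E S x \<subseteq> component_of E S y"
    proof
      fix z assume "z \<in> component_of E S x"
      then obtain ys where ys: "walk_in E S ys" "hd ys = x" "last ys = z"
        unfolding component_of_def by blast
      have r: "walk_in E S (rev xs)" "hd (rev xs) = y" "last (rev xs) = x"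
        using walk_rev[of E S xs] xs Esym by auto
      show "z \<in> component_of E S y"
        unfolding component_of_def using walk_join[of E S "rev xs" ys] r ys by auto
    qed
  qed
qed


definition pt :: "'a \<Rightarrow> nat \<Rightarrow> 'a \<Rightarrow> 'a set" where
  "pt s t w = component_of E (layers_ge V E s t) w \<inter> layer V E s t"

lemma pt_parts:
  assumes "w \<in> V" "gdist V E s w = t"
  shows "pt s t w \<in> parts_at V E s t" "w \<in> pt s t w"
proof -
  have w: "w \<in> layers_ge V E s t" "w \<in> layer V E s t"
    using assms by (auto simp: layers_ge_def layer_def)
  then show "w \<in> pt s t w" unfolding pt_def using comp_self by blast
  then show "pt s t w \<in> parts_at V E s t"
    unfolding parts_at_def components_def pt_def using w by blast
qed

lemma parts_sub: "Q \<in> parts_at V E s m \<Longrightarrow> Q \<subseteq> layer V E s m"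
  unfolding parts_at_def by auto

lemma key:
  assumes sV: "s \<in> V" and P: "P \<in> parts_at V E s k" and v: "v \<in> comp_part V E s P"
  shows "\<exists>q\<in>P. k \<le> gdist V E s v \<and> gdist V E q v \<le> gdist V E s v - k"
proof -
  obtain Q where TD: "tree_desc V E s P Q" and vQ: "v \<in> Q"
    using v unfolding comp_part_def by blast
  then have "Q \<in> parts V E s" unfolding tree_desc_def by blast
  then obtain m where Qm: "Q \<in> parts_at V E s m" unfolding parts_def by blast
  then obtain C where C: "C \<in> components E (layers_ge V E s m)" "Q = C \<inter> layer V E s m"
    unfolding parts_at_def by blast
  then obtain x where x: "C = component_of E (layers_ge V E s m) x"
    unfolding components_def by blast
  have vL: "v \<in> V" "gdist V E s v = m" using vQ C by (auto simp: layer_def)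
  have QQ: "Q = pt s m v" unfolding pt_def using C x vQ comp_eq by blast
  obtain xs where xs: "walk_in E V xs" "hd xs = s" "last xs = v" "length xs = Suc m"
    using gdist_walk[OF sV vL(1)] vL by auto
  have xsV: "\<And>t. t < Suc m \<Longrightarrow> xs ! t \<in> V" using xs unfolding walk_in_def by auto
  have xsd: "\<And>t. t < Suc m \<Longrightarrow> gdist V E s (xs ! t) = t"
    using gdist_nth[OF xs(1) xs(2)] xs vL by auto
  define ps where "ps = map (\<lambda>t. pt s t (xs ! t)) [0..<Suc m]"
  have "walk_in (tree_adj E) (parts V E s) ps"
    unfolding walk_in_def
  proof (intro conjI allI impI)
    show "ps \<noteq> []" unfolding ps_def by simp
    show "set ps \<subseteq> parts V E s"
    proof
      fix X assume "X \<in> set ps"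
      then obtain t where "t < Suc m" "X = pt s t (xs ! t)" unfolding ps_def by (auto simp del: upt_Suc)
      then have "X \<in> parts_at V E s t" using pt_parts xsV xsd by auto
      then show "X \<in> parts V E s" unfolding parts_def by blast
    qed
    fix j assume j: "Suc j < length ps"
    then have j': "Suc j < length xs" unfolding ps_def using xs by simp
    have "E (xs ! j) (xs ! Suc j)" using xs(1) j' unfolding walk_in_def by blast
    moreover have "xs ! j \<in> pt s j (xs ! j)" "xs ! Suc j \<in> pt s (Suc j) (xs ! Suc j)"
      using pt_parts xsV xsd j' xs(4) by auto
    ultimately show "tree_adj E (ps ! j) (ps ! Suc j)"
      unfolding ps_def tree_adj_def using j' xs(4)
      by (auto simp del: upt_Suc simp add: nth_map_upt) 
  qed
  moreover have "hd ps = {s}"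
  proof -
    have "[0..<Suc m] = 0 # [1..<Suc m]" by (simp add: upt_rec)
    then have "hd ps = pt s 0 (xs ! 0)" unfolding ps_def by simp
    also have "xs ! 0 = s" using xs by (metis hd_conv_nth walk_in_def)
    finally have "hd ps = pt s 0 s" .
    moreover have "pt s 0 s \<subseteq> {s}"
      unfolding pt_def layer_def using gdist_0 sV by auto
    moreover have "s \<in> pt s 0 s" using pt_parts(2)[of s s 0] sV gdist_0 xsd[of 0] xs
      by (cases xs) auto
    ultimately show ?thesis by blast
  qed
  moreover have "last ps = Q"
  proof -
    have "last ps = pt s m (xs ! m)" unfolding ps_def by simp
    also have "xs ! m = v"
    proof -
      have "last xs = xs ! (length xs - 1)" by (rule last_conv_nth) (use xs in auto)
      then show ?thesis using xs by simp
    qed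
    finally show ?thesis using QQ by simp
  qed
  ultimately have "P \<in> set ps" using TD unfolding tree_desc_def by blast
  then obtain t where t: "t < Suc m" "P = pt s t (xs ! t)" unfolding ps_def by (auto simp del: upt_Suc)
  have "xs ! t \<in> P" using t pt_parts xsV xsd by auto
  then have "gdist V E s (xs ! t) = k" using parts_sub[OF P] by (auto simp: layer_def)
  then have tk: "t = k" using xsd t by simp
  have "gdist V E (xs ! k) v \<le> length (drop k xs) - 1"
    using walk_drop[of E V xs k] xs t tk by (intro gdist_le) auto
  then show ?thesis using \<open>xs ! t \<in> P\<close> tk t vL xs by auto
qed

definition sphere where "sphere p t = {v \<in> V. gdist V E p v = t}"

lemma deg_le: "u \<in> V \<Longrightarrow> card {w \<in> V. E u w} \<le> max_degree V E"
  unfolding max_degree_def degree_def[symmetric] using finV by simp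

lemma sphere_card:
  assumes "p \<in> V"
  shows "card (sphere p t) \<le> max_degree V E ^ t"
proof (induction t)
  case 0
  have "sphere p 0 \<subseteq> {p}" unfolding sphere_def using gdist_0 assms by auto
  then show ?case using card_mono[of "{p}"] by fastforce
next
  case (Suc t)
  have sub: "sphere p (Suc t) \<subseteq> (\<Union>u\<in>sphere p t. {w \<in> V. E u w})"
  proof
    fix w assume "w \<in> sphere p (Suc t)"
    then have w: "w \<in> V" "gdist V E p w = Suc t" unfolding sphere_def by auto
    obtain xs where xs: "walk_in E V xs" "hd xs = p" "last xs = w" "length xs = Suc (Suc t)"
      using gdist_walk[OF assms w(1)] w by auto
    have "gdist V E p (xs ! t) = t" using gdist_nth[OF xs(1) xs(2)] xs w by auto
    moreover have "xs ! t \<in> V" using xs unfolding walk_in_def by auto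
    moreover have "E (xs ! t) (xs ! Suc t)" using xs unfolding walk_in_def by auto
    moreover have "xs ! Suc t = w"
    proof -
      have "last xs = xs ! (length xs - 1)" by (rule last_conv_nth) (use xs in auto)
      then show ?thesis using xs by simp
    qed
    ultimately show "w \<in> (\<Union>u\<in>sphere p t. {w \<in> V. E u w})"
      unfolding sphere_def using w by auto
  qed
  have fs: "finite (sphere p t)" unfolding sphere_def using finV by simp
  have "card (sphere p (Suc t)) \<le> card (\<Union>u\<in>sphere p t. {w \<in> V. E u w})"
    using sub finV by (intro card_mono) (auto intro: finite_subset[of _ V])
  also have "\<dots> \<le> (\<Sum>u\<in>sphere p t. card {w \<in> V. E u w})"
    using card_UN_le[OF fs] by blast
  also have "\<dots> \<le> (\<Sum>u\<in>sphere p t. max_degree V E)"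
    using deg_le by (intro sum_mono) (auto simp: sphere_def)
  also have "\<dots> = card (sphere p t) * max_degree V E" by simp
  also have "\<dots> \<le> max_degree V E ^ t * max_degree V E" using Suc by simp
  finally show ?case by (simp add: mult.commute)
qed

lemma ball_card:
  assumes "p \<in> V" "max_degree V E \<ge> 2"
  shows "card {v \<in> V. gdist V E p v \<le> r} \<le> max_degree V E ^ Suc r"
proof (induction r)
  case 0
  have "{v \<in> V. gdist V E p v \<le> 0} = sphere p 0" unfolding sphere_def by auto
  then show ?case using sphere_card[OF assms(1), of 0] assms(2) by simp
next
  case (Suc r)
  have "{v \<in> V. gdist V E p v \<le> Suc r} = {v \<in> V. gdist V E p v \<le> r} \<union> sphere p (Suc r)"
    unfolding sphere_def by auto
  then have "card {v \<in> V. gdist V E p v \<le> Suc r}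
      \<le> card {v \<in> V. gdist V E p v \<le> r} + card (sphere p (Suc r))"
    by (simp add: card_Un_le)
  also have "\<dots> \<le> max_degree V E ^ Suc r + max_degree V E ^ Suc r"
    using Suc.IH sphere_card[OF assms(1), of "Suc r"] by (intro add_mono)
  also have "\<dots> \<le> max_degree V E ^ Suc (Suc r)"
  proof -
    have "2 * max_degree V E ^ Suc r \<le> max_degree V E * max_degree V E ^ Suc r"
      using assms(2) by (intro mult_right_mono) auto
    then show ?thesis by (metis mult_2 power_Suc)
  qed
  finally show ?case .
qed

end

theorem mainTheorem5:
  fixes V :: "'a set" and E :: "'a \<Rightarrow> 'a \<Rightarrow> bool" and s :: 'a
    and Delta ell k i :: nat and P :: "'a set"
  assumes "graph V E" and "connected_graph V E"
    and "Delta = max_degree V E" and "Delta \<ge> 2"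
    and "s \<in> V"
    and "ell \<ge> tree_length V E s"
    and "P \<in> parts_at V E s k"
    and "i \<ge> k"
  shows "card (comp_part V E s P \<inter> layers_le V E s i) \<le> Delta ^ (ell + i - k + 2)"
proof -
  note G = assms(1) and CG = assms(2)
  have PL: "P \<subseteq> layer V E s k" using parts_sub[OF G CG] assms(7) by blast
  have PV: "P \<subseteq> V" using PL by (auto simp: layer_def)
  obtain p where pP: "p \<in> P" using assms(7) unfolding parts_at_def by blast
  have pV: "p \<in> V" using pP PV by blast
  have Pparts: "P \<in> parts V E s" using assms(7) unfolding parts_def by blast
  have partsV: "\<And>Q. Q \<in> parts V E s \<Longrightarrow> Q \<subseteq> V"
    unfolding parts_def using parts_sub[OF G CG] by (fastforce simp: layer_def)
  have fin: "finite (\<Union>Q\<in>parts V E s. {gdist V E u v | u v. u \<in> Q \<and> v \<in> Q})"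
  proof (rule finite_subset)
    show "(\<Union>Q\<in>parts V E s. {gdist V E u v | u v. u \<in> Q \<and> v \<in> Q})
        \<subseteq> (\<lambda>(u, v). gdist V E u v) ` (V \<times> V)"
      using partsV by fastforce
    show "finite ((\<lambda>(u, v). gdist V E u v) ` (V \<times> V))"
      using finV[OF G CG] by simp
  qed
  have diam: "\<And>q. q \<in> P \<Longrightarrow> gdist V E p q \<le> ell"
  proof -
    fix q assume "q \<in> P"
    then have "gdist V E p q \<in> (\<Union>Q\<in>parts V E s. {gdist V E u v | u v. u \<in> Q \<and> v \<in> Q})"
      using pP Pparts by blast
    then have "gdist V E p q \<le> tree_length V E s"
      unfolding tree_length_def using fin by (rule Max_ge[rotated])
    then show "gdist V E p q \<le> ell" using assms(6) by simp
  qed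
  have sub: "comp_part V E s P \<inter> layers_le V E s i \<subseteq> {v \<in> V. gdist V E p v \<le> ell + (i - k)}"
  proof
    fix v assume v: "v \<in> comp_part V E s P \<inter> layers_le V E s i"
    then have vV: "v \<in> V" and vi: "gdist V E s v \<le> i" by (auto simp: layers_le_def)
    obtain q where q: "q \<in> P" "gdist V E q v \<le> gdist V E s v - k"
      using key[OF G CG assms(5) assms(7)] v by blast
    have qV: "q \<in> V" using q PV by blast
    have "gdist V E p v \<le> gdist V E p q + gdist V E q v" using gdist_tri[OF G CG pV qV vV] .
    also have "\<dots> \<le> ell + (i - k)" using diam[OF q(1)] q(2) vi by simp
    finally show "v \<in> {v \<in> V. gdist V E p v \<le> ell + (i - k)}" using vV by simp
  qed
  have "card (comp_part V E s P \<inter> layers_le V E s i) \<le> card {v \<in> V. gdist V E p v \<le> ell + (i - k)}"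
    using sub finV[OF G CG] by (intro card_mono) auto
  also have "\<dots> \<le> Delta ^ Suc (ell + (i - k))"
    using ball_card[OF G CG pV] assms(3,4) by simp
  also have "\<dots> \<le> Delta ^ (ell + i - k + 2)"
    using assms(4,8) by (intro power_increasing) auto
  finally show ?thesis .
qed

end
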